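(* Let $D$ be a digraph, let $S\subseteq V(D)$ be a nonempty set of vertices of in-degree $0$ in $D$, and let $T\subseteq V(D)$ with $T\cap S=\emptyset$. If $d^+(v)\ge \Delta^-(D)$ for every $v\in V(D)\setminus T$, then there exist $|S|$ vertex-disjoint directed paths in $D$, each starting in $S$ and ending in $T$.
   Context: $d^+(v)$ is the out-degree of $v$ and $\Delta^-(D)$ is the maximum in-degree of $D$. *)

theory Defs
  imports Main
begin

definition digraph :: "'a set \<Rightarrow> ('a \<times> 'a) set \<Rightarrow> bool" where
  "digraph V E \<longleftrightarrow> finite V \<and> E \<subseteq> V \<times> V \<and> (\<forall>v. (v, v) \<notin> E)"

definition out_degree :: "('a \<times> 'a) set \<Rightarrow> 'a \<Rightarrow> nat" where
  "out_degree E v = card {w. (v, w) \<in> E}"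

definition in_degree :: "('a \<times> 'a) set \<Rightarrow> 'a \<Rightarrow> nat" where
  "in_degree E v = card {u. (u, v) \<in> E}"

definition max_in_degree :: "'a set \<Rightarrow> ('a \<times> 'a) set \<Rightarrow> nat" where
  "max_in_degree V E = (if V = {} then 0 else Max (in_degree E ` V))"

definition dpath :: "'a set \<Rightarrow> ('a \<times> 'a) set \<Rightarrow> 'a list \<Rightarrow> bool" where
  "dpath V E p \<longleftrightarrow> p \<noteq> [] \<and> distinct p \<and> set p \<subseteq> V \<and>
     (\<forall>i. Suc i < length p \<longrightarrow> (p ! i, p ! Suc i) \<in> E)"

end

theory Submission
  imports Defs
begin


definition walk :: "('a \<times> 'a) set \<Rightarrow> 'a list \<Rightarrow> bool" where
  "walk E p \<longleftrightarrow> p \<noteq> [] \<and> successively (\<lambda>a b. (a, b) \<in> E) p"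

definition sep :: "('a \<times> 'a) set \<Rightarrow> 'a set \<Rightarrow> 'a set \<Rightarrow> 'a set \<Rightarrow> bool" where
  "sep E A B X \<longleftrightarrow> (\<forall>p. walk E p \<longrightarrow> hd p \<in> A \<longrightarrow> last p \<in> B \<longrightarrow> set p \<inter> X \<noteq> {})"

definition linkage :: "('a \<times> 'a) set \<Rightarrow> 'a set \<Rightarrow> 'a set \<Rightarrow> nat \<Rightarrow> 'a list set \<Rightarrow> bool" where
  "linkage E A B k P \<longleftrightarrow> finite P \<and> card P = k \<and> (\<forall>p\<in>P. walk E p \<and> hd p \<in> A \<and> last p \<in> B)
     \<and> (\<forall>p\<in>P. \<forall>q\<in>P. p \<noteq> q \<longrightarrow> set p \<inter> set q = {})"

definition clean :: "'a set \<Rightarrow> 'a set \<Rightarrow> 'a list \<Rightarrow> bool" where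
  "clean A B p \<longleftrightarrow> distinct p \<and> set (tl p) \<inter> A = {} \<and> set (butlast p) \<inter> B = {}"

lemma walk_single[simp]: "walk E [x]"
  by (simp add: walk_def)

lemma walk_Cons: "walk E (x # xs) \<longleftrightarrow> xs = [] \<or> ((x, hd xs) \<in> E \<and> walk E xs)"
  by (auto simp: walk_def successively_Cons)

lemma walk_mono: "walk E p \<Longrightarrow> E \<subseteq> F \<Longrightarrow> walk F p"
  unfolding walk_def by (auto elim: successively_mono)

lemma walk_append: "walk E p \<Longrightarrow> walk E q \<Longrightarrow> (last p, hd q) \<in> E \<Longrightarrow> walk E (p @ q)"
  unfolding walk_def by (auto simp: successively_append_iff)

lemma walk_snoc: "walk E p \<Longrightarrow> (last p, w) \<in> E \<Longrightarrow> walk E (p @ [w])"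
  using walk_append[of E p "[w]"] by simp

lemma walk_join: "walk E p \<Longrightarrow> walk E q \<Longrightarrow> last p = hd q \<Longrightarrow> walk E (p @ tl q)"
proof (induction p rule: rev_induct)
  case Nil then show ?case by (simp add: walk_def)
next
  case (snoc x xs)
  then show ?case
    by (cases q) (auto simp: walk_def successively_append_iff successively_Cons)
qed

lemma walk_split: "walk E (xs @ v # ys) \<Longrightarrow> walk E (xs @ [v]) \<and> walk E (v # ys)"
  unfolding walk_def by (auto simp: successively_append_iff successively_Cons)

lemma walk_in_V: "walk E p \<Longrightarrow> E \<subseteq> V \<times> V \<Longrightarrow> hd p \<in> V \<Longrightarrow> set p \<subseteq> V"
proof (induction p)
  case Nil then show ?case by simp
next
  case (Cons x xs)
  then show ?case by (cases xs) (auto simp: walk_Cons)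
qed

lemma walk_distinct:
  assumes "walk E p"
  shows "\<exists>q. walk E q \<and> distinct q \<and> hd q = hd p \<and> last q = last p \<and> set q \<subseteq> set p"
  using assms
proof (induction "length p" arbitrary: p rule: less_induct)
  case less
  show ?case
  proof (cases "distinct p")
    case True then show ?thesis using less.prems by blast
  next
    case False
    then obtain xs v ys zs where p: "p = xs @ [v] @ ys @ [v] @ zs"
      using not_distinct_decomp by blast
    have w1: "walk E (xs @ [v])" using walk_split[of E xs v "ys @ [v] @ zs"] less.prems p by simp
    have w2: "walk E (v # zs)" using walk_split[of E "xs @ [v] @ ys" v zs] less.prems p by simp
    have w: "walk E (xs @ [v] @ zs)"
      using walk_join[OF w1 w2] by simp
    have "length (xs @ [v] @ zs) < length p" using p by simp
    from less.hyps[OF this w] obtain q where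
      "walk E q \<and> distinct q \<and> hd q = hd (xs @ [v] @ zs) \<and> last q = last (xs @ [v] @ zs) \<and> set q \<subseteq> set (xs @ [v] @ zs)"
      by blast
    moreover have "hd (xs @ [v] @ zs) = hd p" by (cases xs) (simp_all add: p)
    moreover have "last (xs @ [v] @ zs) = last p" by (cases zs) (simp_all add: p)
    moreover have "set (xs @ [v] @ zs) \<subseteq> set p" by (auto simp: p)
    ultimately show ?thesis by (metis subset_trans)
  qed
qed

lemma walk_suffix:
  assumes "walk E p" "set p \<inter> A \<noteq> {}"
  shows "\<exists>q. walk E q \<and> hd q \<in> A \<and> last q = last p \<and> set q \<subseteq> set p \<and> set (tl q) \<inter> A = {}
           \<and> (distinct p \<longrightarrow> distinct q) \<and> (\<exists>r. p = r @ q)"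
  using assms
proof (induction p)
  case Nil then show ?case by simp
next
  case (Cons x xs)
  show ?case
  proof (cases "set xs \<inter> A \<noteq> {}")
    case True
    then have "xs \<noteq> []" by auto
    then have "walk E xs" using Cons.prems by (auto simp: walk_Cons)
    from Cons.IH[OF this True] obtain q r where
      q: "walk E q" "hd q \<in> A" "last q = last xs" "set q \<subseteq> set xs" "set (tl q) \<inter> A = {}"
           "distinct xs \<longrightarrow> distinct q" "xs = r @ q" by blast
    have a: "last q = last (x # xs)" using q(3) \<open>xs \<noteq> []\<close> by simp
    have b: "distinct (x # xs) \<longrightarrow> distinct q" using q(6) by auto
    have c: "x # xs = (x # r) @ q" using q(7) by simp
    have d: "set q \<subseteq> set (x # xs)" using q(4) by auto
    show ?thesis using q a b c d by (intro exI[of _ q] conjI exI[of _ "x # r"]) simp_all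
  next
    case False
    then have "x \<in> A" using Cons.prems by auto
    then have "walk E (x # xs) \<and> hd (x # xs) \<in> A \<and> last (x # xs) = last (x # xs) \<and> set (x # xs) \<subseteq> set (x # xs)
       \<and> set (tl (x # xs)) \<inter> A = {} \<and> (distinct (x # xs) \<longrightarrow> distinct (x # xs)) \<and> x # xs = [] @ (x # xs)"
      using Cons.prems False by simp
    then show ?thesis by (intro exI[of _ "x # xs"] conjI exI[of _ "[]"]) simp_all
  qed
qed

lemma walk_prefix:
  assumes "walk E p" "set p \<inter> B \<noteq> {}"
  shows "\<exists>q. walk E q \<and> last q \<in> B \<and> hd q = hd p \<and> set q \<subseteq> set p \<and> set (butlast q) \<inter> B = {}
           \<and> (distinct p \<longrightarrow> distinct q) \<and> (\<exists>r. p = q @ r)"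
  using assms
proof (induction p)
  case Nil then show ?case by simp
next
  case (Cons x xs)
  show ?case
  proof (cases "x \<in> B")
    case True
    then have "walk E [x] \<and> last [x] \<in> B \<and> hd [x] = hd (x # xs) \<and> set [x] \<subseteq> set (x # xs) \<and> set (butlast [x]) \<inter> B = {}
           \<and> (distinct (x # xs) \<longrightarrow> distinct [x]) \<and> x # xs = [x] @ xs" by simp
    then show ?thesis by (intro exI[of _ "[x]"] conjI exI[of _ xs]) simp_all
  next
    case False
    then have ne: "set xs \<inter> B \<noteq> {}" using Cons.prems by auto
    then have "xs \<noteq> []" by auto
    then have wx: "walk E xs" "(x, hd xs) \<in> E" using Cons.prems by (auto simp: walk_Cons)
    from Cons.IH[OF wx(1) ne] obtain q r where
      q: "walk E q" "last q \<in> B" "hd q = hd xs" "set q \<subseteq> set xs" "set (butlast q) \<inter> B = {}"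
           "distinct xs \<longrightarrow> distinct q" "xs = q @ r" by blast
    have qne: "q \<noteq> []" using q(1) by (simp add: walk_def)
    have "walk E (x # q)" using q(1,3) wx qne by (simp add: walk_Cons)
    moreover have "last (x # q) \<in> B" using q(2) qne by simp
    moreover have "set (butlast (x # q)) \<inter> B = {}" using q(5) qne False by simp
    moreover have "distinct (x # xs) \<longrightarrow> distinct (x # q)" using q(4,6) by auto
    moreover have "x # xs = (x # q) @ r" using q(7) by simp
    moreover have "hd (x # q) = hd (x # xs)" by simp
    moreover have "set (x # q) \<subseteq> set (x # xs)" using q(4) by auto
    ultimately show ?thesis by (intro exI[of _ "x # q"] conjI exI[of _ r]) simp_all
  qed
qed



lemma clean_walk:
  assumes "walk E p" "hd p \<in> A" "last p \<in> B"
  shows "\<exists>q. walk E q \<and> hd q \<in> A \<and> last q \<in> B \<and> clean A B q \<and> set q \<subseteq> set p"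
proof -
  obtain p1 where p1: "walk E p1" "distinct p1" "hd p1 = hd p" "last p1 = last p" "set p1 \<subseteq> set p"
    using walk_distinct[OF assms(1)] by blast
  have "p1 \<noteq> []" using p1 by (simp add: walk_def)
  then have "set p1 \<inter> B \<noteq> {}" using p1 assms by (metis disjoint_iff last_in_set)
  then obtain q1 r1 where q1: "walk E q1" "last q1 \<in> B" "hd q1 = hd p1" "set q1 \<subseteq> set p1"
    "set (butlast q1) \<inter> B = {}" "distinct q1"
    using walk_prefix[OF p1(1)] p1(2) by blast
  have "q1 \<noteq> []" using q1 by (simp add: walk_def)
  then have "set q1 \<inter> A \<noteq> {}" using q1 p1 assms by (metis disjoint_iff hd_in_set)
  then obtain q2 r where q2: "walk E q2" "hd q2 \<in> A" "last q2 = last q1" "set q2 \<subseteq> set q1"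
    "set (tl q2) \<inter> A = {}" "distinct q2" "q1 = r @ q2"
    using walk_suffix[OF q1(1)] q1(6) by blast
  have "q2 \<noteq> []" using q2 by (simp add: walk_def)
  then have "butlast q1 = r @ butlast q2" using q2(7) by (simp add: butlast_append)
  then have "set (butlast q2) \<inter> B = {}" using q1(5) by auto
  then have "clean A B q2" unfolding clean_def using q2 by auto
  moreover have "last q2 \<in> B" "set q2 \<subseteq> set p" using q2 q1 p1 by auto
  ultimately show ?thesis using q2 by blast
qed

lemma refine:
  assumes "linkage E A B k P"
  shows "\<exists>P'. linkage E A B k P' \<and> (\<forall>p\<in>P'. clean A B p)"
proof -
  have "\<forall>p\<in>P. \<exists>q. walk E q \<and> hd q \<in> A \<and> last q \<in> B \<and> clean A B q \<and> set q \<subseteq> set p"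
    using assms clean_walk unfolding linkage_def by blast
  then obtain f where f: "\<And>p. p \<in> P \<Longrightarrow> walk E (f p) \<and> hd (f p) \<in> A \<and> last (f p) \<in> B \<and> clean A B (f p) \<and> set (f p) \<subseteq> set p"
    by metis
  have disj: "\<And>p q. p \<in> P \<Longrightarrow> q \<in> P \<Longrightarrow> p \<noteq> q \<Longrightarrow> set p \<inter> set q = {}"
    using assms unfolding linkage_def by blast
  have ne: "\<And>p. p \<in> P \<Longrightarrow> f p \<noteq> []" using f by (simp add: walk_def)
  have inj: "inj_on f P"
  proof (rule inj_onI)
    fix p q assume pq: "p \<in> P" "q \<in> P" "f p = f q"
    show "p = q"
    proof (rule ccontr)
      assume "p \<noteq> q"
      then have "set p \<inter> set q = {}" using disj pq by blast
      moreover have "set (f p) \<subseteq> set p" "set (f p) \<subseteq> set q" using f pq by metis+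
      moreover have "set (f p) \<noteq> {}" using ne pq by simp
      ultimately show False using hd_in_set[of "f p"] by blast
    qed
  qed
  have d2: "\<forall>p\<in>f ` P. \<forall>q\<in>f ` P. p \<noteq> q \<longrightarrow> set p \<inter> set q = {}"
  proof (intro ballI impI)
    fix p q assume "p \<in> f ` P" "q \<in> f ` P" "p \<noteq> q"
    then obtain p0 q0 where "p0 \<in> P" "q0 \<in> P" "p = f p0" "q = f q0" "p0 \<noteq> q0" by blast
    then show "set p \<inter> set q = {}" using f disj by blast
  qed
  have "linkage E A B k (f ` P)"
    unfolding linkage_def using assms inj d2 f by (auto simp: linkage_def card_image)
  then show ?thesis using f by blast
qed

lemma linkage_mono: "linkage E A B k P \<Longrightarrow> E \<subseteq> F \<Longrightarrow> linkage F A B k P"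
  unfolding linkage_def using walk_mono by blast

lemma walk_empty: "walk {} p \<Longrightarrow> \<exists>a. p = [a]"
  by (cases p) (simp add: walk_def, simp add: walk_Cons)

lemma walk_avoid1: "walk (insert (x, y) F) p \<Longrightarrow> x \<notin> set (butlast p) \<Longrightarrow> walk F p"
proof (induction p)
  case Nil then show ?case by (simp add: walk_def)
next
  case (Cons a xs)
  then show ?case by (cases xs) (auto simp: walk_Cons)
qed

lemma walk_avoid2: "walk (insert (x, y) F) p \<Longrightarrow> y \<notin> set (tl p) \<Longrightarrow> walk F p"
proof (induction p)
  case Nil then show ?case by (simp add: walk_def)
next
  case (Cons a xs)
  then show ?case by (cases xs) (auto simp: walk_Cons)
qed

lemma last_join: "p \<noteq> [] \<Longrightarrow> q \<noteq> [] \<Longrightarrow> last p = hd q \<Longrightarrow> last (p @ tl q) = last q"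
  by (cases q) auto

lemma set_butlast_last: "p \<noteq> [] \<Longrightarrow> v \<in> set p \<Longrightarrow> v \<notin> set (butlast p) \<Longrightarrow> v = last p"
  by (metis append_butlast_last_id butlast.simps(2) in_set_butlast_appendI last_ConsL last_in_set list.distinct(1) rotate1.simps(2) set_ConsD set_rotate1)

lemma set_tl_hd: "p \<noteq> [] \<Longrightarrow> v \<in> set p \<Longrightarrow> v \<notin> set (tl p) \<Longrightarrow> v = hd p"
  by (cases p) auto



lemma menger:
  assumes "finite E" "finite A" "finite B" "\<And>X. finite X \<Longrightarrow> sep E A B X \<Longrightarrow> k \<le> card X"
  shows "\<exists>P. linkage E A B k P"
  using assms
proof (induction E arbitrary: A B k rule: finite_induct)
  case empty
  have "sep {} A B (A \<inter> B)"
    unfolding sep_def using walk_empty by fastforce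
  then have "k \<le> card (A \<inter> B)" using empty.prems by simp
  then obtain C where C: "C \<subseteq> A \<inter> B" "card C = k"
    using obtain_subset_with_card_n by metis
  have fin: "finite C" using C empty.prems finite_subset by blast
  have "inj_on (\<lambda>a. [a]) C" by (simp add: inj_on_def)
  then have "linkage {} A B k ((\<lambda>a. [a]) ` C)"
    using C fin unfolding linkage_def by (auto simp: card_image)
  then show ?case by blast
next
  case (insert e F)
  obtain x y where e: "e = (x, y)" by fastforce
  let ?E = "insert e F"
  show ?case
  proof (cases "\<forall>X. finite X \<longrightarrow> sep F A B X \<longrightarrow> k \<le> card X")
    case True
    then obtain P where "linkage F A B k P" using insert.IH insert.prems by blast
    then show ?thesis using linkage_mono by blast
  next
    case False
    then obtain Y where Y: "finite Y" "sep F A B Y" "card Y < k" using not_le by blast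
    define X1 where "X1 = insert x Y"
    define X2 where "X2 = insert y Y"
    have sepX1: "sep ?E A B X1"
      unfolding sep_def
    proof (intro allI impI)
      fix p assume p: "walk ?E p" "hd p \<in> A" "last p \<in> B"
      show "set p \<inter> X1 \<noteq> {}"
      proof (cases "x \<in> set p")
        case True then show ?thesis by (auto simp: X1_def)
      next
        case False
        then have "x \<notin> set (butlast p)" by (meson in_set_butlastD)
        then have "walk F p" using walk_avoid1[of x y F p] p(1) e by simp
        then show ?thesis using Y(2) p unfolding sep_def X1_def by blast
      qed
    qed
    have sepX2: "sep ?E A B X2"
      unfolding sep_def
    proof (intro allI impI)
      fix p assume p: "walk ?E p" "hd p \<in> A" "last p \<in> B"
      show "set p \<inter> X2 \<noteq> {}"
      proof (cases "y \<in> set p")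
        case True then show ?thesis by (auto simp: X2_def)
      next
        case False
        then have "y \<notin> set (tl p)" by (cases p) auto
        then have "walk F p" using walk_avoid2[of x y F p] p(1) e by simp
        then show ?thesis using Y(2) p unfolding sep_def X2_def by blast
      qed
    qed
    have "k \<le> card X1" using insert.prems(3) sepX1 Y(1) by (simp add: X1_def)
    then have xY: "x \<notin> Y" and cX1: "card X1 = k" using Y by (auto simp: X1_def card_insert_if split: if_splits)
    have "k \<le> card X2" using insert.prems(3) sepX2 Y(1) by (simp add: X2_def)
    then have yY: "y \<notin> Y" and cX2: "card X2 = k" using Y by (auto simp: X2_def card_insert_if split: if_splits)
    have finX: "finite X1" "finite X2" using Y by (auto simp: X1_def X2_def)
    have h1: "k \<le> card Z" if Z: "finite Z" "sep F A X1 Z" for Z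
    proof -
      have "sep ?E A B Z"
        unfolding sep_def
      proof (intro allI impI)
        fix p assume p: "walk ?E p" "hd p \<in> A" "last p \<in> B"
        have "set p \<inter> X1 \<noteq> {}" using sepX1 p unfolding sep_def by blast
        then obtain q where q: "walk ?E q" "last q \<in> X1" "hd q = hd p" "set q \<subseteq> set p"
          "set (butlast q) \<inter> X1 = {}"
          using walk_prefix[OF p(1)] by blast
        have "x \<notin> set (butlast q)" using q(5) by (auto simp: X1_def)
        then have "walk F q" using walk_avoid1[of x y F q] q(1) e by simp
        then have "set q \<inter> Z \<noteq> {}" using Z(2) q p unfolding sep_def by auto
        then show "set p \<inter> Z \<noteq> {}" using q(4) by blast
      qed
      then show ?thesis using insert.prems(3) Z by blast
    qed
    obtain P0 where "linkage F A X1 k P0"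
      using insert.IH[OF insert.prems(1) finX(1)] h1 by blast
    then obtain P1 where P1: "linkage F A X1 k P1" "\<forall>p\<in>P1. clean A X1 p"
      using refine by blast
    have h2: "k \<le> card Z" if Z: "finite Z" "sep F X2 B Z" for Z
    proof -
      have "sep ?E A B Z"
        unfolding sep_def
      proof (intro allI impI)
        fix p assume p: "walk ?E p" "hd p \<in> A" "last p \<in> B"
        have "set p \<inter> X2 \<noteq> {}" using sepX2 p unfolding sep_def by blast
        then obtain q r where q: "walk ?E q" "hd q \<in> X2" "last q = last p" "set q \<subseteq> set p"
          "set (tl q) \<inter> X2 = {}"
          using walk_suffix[OF p(1)] by blast
        have "y \<notin> set (tl q)" using q(5) by (auto simp: X2_def)
        then have "walk F q" using walk_avoid2[of x y F q] q(1) e by simp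
        then have "set q \<inter> Z \<noteq> {}" using Z(2) q p unfolding sep_def by auto
        then show "set p \<inter> Z \<noteq> {}" using q(4) by blast
      qed
      then show ?thesis using insert.prems(3) Z by blast
    qed
    obtain Q0 where "linkage F X2 B k Q0"
      using insert.IH[OF finX(2) insert.prems(2)] h2 by blast
    then obtain Q1 where Q1: "linkage F X2 B k Q1" "\<forall>q\<in>Q1. clean X2 B q"
      using refine by blast
    have P1w: "\<And>p. p \<in> P1 \<Longrightarrow> walk F p \<and> hd p \<in> A \<and> last p \<in> X1 \<and> p \<noteq> []"
      using P1 by (auto simp: linkage_def walk_def)
    have Q1w: "\<And>q. q \<in> Q1 \<Longrightarrow> walk F q \<and> hd q \<in> X2 \<and> last q \<in> B \<and> q \<noteq> []"
      using Q1 by (auto simp: linkage_def walk_def)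
    have claim: "v \<in> Y \<and> v = last p \<and> v = hd q"
      if pq: "p \<in> P1" "q \<in> Q1" "v \<in> set p" "v \<in> set q" for p q v
    proof -
      obtain p1 p2 where p12: "p = p1 @ v # p2" using split_list pq(3) by metis
      obtain q1 q2 where q12: "q = q1 @ v # q2" using split_list pq(4) by metis
      have wp: "walk F (p1 @ [v])" using walk_split[of F p1 v p2] P1w[OF pq(1)] p12 by simp
      have wq: "walk F (v # q2)" using walk_split[of F q1 v q2] Q1w[OF pq(2)] q12 by simp
      have wW: "walk F (p1 @ v # q2)" using walk_join[OF wp wq] by simp
      have "hd (p1 @ v # q2) = hd p" using p12 by (cases p1) auto
      moreover have "last (p1 @ v # q2) = last q" using q12 by (cases q2) auto
      moreover have "walk F (p1 @ v # q2) \<longrightarrow> hd (p1 @ v # q2) \<in> A \<longrightarrow> last (p1 @ v # q2) \<in> B \<longrightarrow> set (p1 @ v # q2) \<inter> Y \<noteq> {}"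
        using Y(2) unfolding sep_def by blast
      ultimately have "set (p1 @ v # q2) \<inter> Y \<noteq> {}"
        using wW P1w[OF pq(1)] Q1w[OF pq(2)] by simp
      moreover have "set p1 \<subseteq> set (butlast p)" using p12 by (simp add: butlast_append)
      moreover have "set q2 \<subseteq> set (tl q)" using q12 by (cases q1) auto
      moreover have "set (butlast p) \<inter> X1 = {}" using P1(2) pq(1) by (simp add: clean_def)
      moreover have "set (tl q) \<inter> X2 = {}" using Q1(2) pq(2) by (simp add: clean_def)
      ultimately have vY: "v \<in> Y" by (auto simp: X1_def X2_def)
      have bp: "set (butlast p) \<inter> X1 = {}" using P1(2) pq(1) by (simp add: clean_def)
      have tq: "set (tl q) \<inter> X2 = {}" using Q1(2) pq(2) by (simp add: clean_def)
      have "v \<in> X1" "v \<in> X2" using vY by (simp_all add: X1_def X2_def)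
      then have nb: "v \<notin> set (butlast p)" and nt: "v \<notin> set (tl q)" using bp tq by blast+
      have pne: "p \<noteq> []" and qne: "q \<noteq> []" using pq(3,4) by auto
      have l1: "v = last p" by (rule set_butlast_last[OF pne pq(3) nb])
      have l2: "v = hd q" by (rule set_tl_hd[OF qne pq(4) nt])
      show ?thesis using vY l1 l2 by blast
    qed
    have disjP: "\<And>p p'. p \<in> P1 \<Longrightarrow> p' \<in> P1 \<Longrightarrow> p \<noteq> p' \<Longrightarrow> set p \<inter> set p' = {}"
      using P1(1) unfolding linkage_def by blast
    have disjQ: "\<And>p p'. p \<in> Q1 \<Longrightarrow> p' \<in> Q1 \<Longrightarrow> p \<noteq> p' \<Longrightarrow> set p \<inter> set p' = {}"
      using Q1(1) unfolding linkage_def by blast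
    have lastinj: "inj_on last P1"
    proof (rule inj_onI)
      fix p p' assume a: "p \<in> P1" "p' \<in> P1" "last p = last p'"
      show "p = p'"
      proof (rule ccontr)
        assume "p \<noteq> p'"
        then have "set p \<inter> set p' = {}" using disjP a by blast
        moreover have "last p \<in> set p" "last p' \<in> set p'" using P1w[OF a(1)] P1w[OF a(2)] by auto
        ultimately show False using a(3) by auto
      qed
    qed
    have hdinj: "inj_on hd Q1"
    proof (rule inj_onI)
      fix p p' assume a: "p \<in> Q1" "p' \<in> Q1" "hd p = hd p'"
      show "p = p'"
      proof (rule ccontr)
        assume "p \<noteq> p'"
        then have "set p \<inter> set p' = {}" using disjQ a by blast
        moreover have "hd p \<in> set p" "hd p' \<in> set p'" using Q1w[OF a(1)] Q1w[OF a(2)] by auto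
        ultimately show False using a(3) by auto
      qed
    qed
    have "last ` P1 = X1"
    proof (rule card_subset_eq[OF finX(1)])
      show "last ` P1 \<subseteq> X1" using P1w by auto
      show "card (last ` P1) = card X1" using card_image[OF lastinj] P1(1) cX1 by (simp add: linkage_def)
    qed
    have "hd ` Q1 = X2"
    proof (rule card_subset_eq[OF finX(2)])
      show "hd ` Q1 \<subseteq> X2" using Q1w by auto
      show "card (hd ` Q1) = card X2" using card_image[OF hdinj] Q1(1) cX2 by (simp add: linkage_def)
    qed
    then have "\<forall>z\<in>X2. \<exists>q\<in>Q1. hd q = z" by auto
    then obtain qs where qs: "\<And>z. z \<in> X2 \<Longrightarrow> qs z \<in> Q1 \<and> hd (qs z) = z" by metis
    define g where "g v = (if v = x then y else v)" for v
    have gX: "g v \<in> X2" if "v \<in> X1" for v using that by (auto simp: g_def X1_def X2_def)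
    have ginj: "g v = g w \<Longrightarrow> v \<in> X1 \<Longrightarrow> w \<in> X1 \<Longrightarrow> v = w" for v w
      using xY yY by (auto simp: g_def X1_def split: if_splits)
    define Qp where "Qp p = qs (g (last p))" for p
    have Qp: "Qp p \<in> Q1 \<and> hd (Qp p) = g (last p)" if "p \<in> P1" for p
      unfolding Qp_def using qs gX P1w that by blast
    define f where "f p = p @ (if last p = x then Qp p else tl (Qp p))" for p
    have fw: "walk ?E (f p) \<and> hd (f p) \<in> A \<and> last (f p) \<in> B" if p: "p \<in> P1" for p
    proof -
      have wp: "walk ?E p" using P1w[OF p] walk_mono by blast
      have wq: "walk ?E (Qp p)" using Q1w Qp[OF p] walk_mono by blast
      have qne: "Qp p \<noteq> []" using Q1w Qp[OF p] by blast
      have pne: "p \<noteq> []" using P1w p by blast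
      have lq: "last (Qp p) \<in> B" using Q1w Qp[OF p] by blast
      show ?thesis
      proof (cases "last p = x")
        case True
        then have "(last p, hd (Qp p)) \<in> ?E" using Qp[OF p] e by (simp add: g_def)
        then have "walk ?E (f p)" using walk_append[OF wp wq] True by (simp add: f_def)
        moreover have "last (f p) \<in> B" using True qne lq by (simp add: f_def)
        ultimately show ?thesis using pne P1w[OF p] by (simp add: f_def)
      next
        case False
        then have lh: "last p = hd (Qp p)" using Qp[OF p] by (simp add: g_def)
        then have "walk ?E (f p)" using walk_join[OF wp wq] False by (simp add: f_def)
        moreover have "last (f p) \<in> B" using False last_join[OF pne qne lh] lq by (simp add: f_def)
        ultimately show ?thesis using pne P1w[OF p] by (simp add: f_def)
      qed
    qed
    have fs: "set (f p) \<subseteq> set p \<union> set (Qp p)" for p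
      by (cases "Qp p") (auto simp: f_def)
    have cross: "set p \<inter> set (Qp p') = {}" if a: "p \<in> P1" "p' \<in> P1" "p \<noteq> p'" for p p'
    proof (rule ccontr)
      assume "set p \<inter> set (Qp p') \<noteq> {}"
      then obtain v where v: "v \<in> set p" "v \<in> set (Qp p')" by blast
      have c: "v \<in> Y \<and> v = last p \<and> v = hd (Qp p')" using claim[OF a(1) _ v] Qp[OF a(2)] by blast
      then have gY: "g (last p') \<in> Y" using Qp[OF a(2)] by metis
      then have "last p' \<noteq> x" using yY by (auto simp: g_def)
      then have "g (last p') = last p'" by (simp add: g_def)
      then have "last p = last p'" using c Qp[OF a(2)] by metis
      then show False using lastinj a unfolding inj_on_def by blast
    qed
    have fd: "set (f p) \<inter> set (f p') = {}" if a: "p \<in> P1" "p' \<in> P1" "p \<noteq> p'" for p p'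
    proof -
      have "last p \<noteq> last p'" using lastinj a unfolding inj_on_def by blast
      then have "g (last p) \<noteq> g (last p')" using ginj P1w a by blast
      then have "Qp p \<noteq> Qp p'" using Qp a by metis
      then have "set (Qp p) \<inter> set (Qp p') = {}" using disjQ Qp a by blast
      moreover have "set p \<inter> set p' = {}" using disjP a by blast
      moreover have "set p \<inter> set (Qp p') = {}" using cross a by blast
      moreover have "set p' \<inter> set (Qp p) = {}" using cross a by blast
      ultimately show ?thesis using fs[of p] fs[of p'] by blast
    qed
    have finj: "inj_on f P1"
    proof (rule inj_onI)
      fix p p' assume a: "p \<in> P1" "p' \<in> P1" "f p = f p'"
      show "p = p'"
      proof (rule ccontr)
        assume "p \<noteq> p'"
        then have "set (f p) \<inter> set (f p') = {}" using fd a by blast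
        moreover have "f p \<noteq> []" using fw[OF a(1)] by (simp add: walk_def)
        ultimately show False using a(3) by simp
      qed
    qed
    have "linkage ?E A B k (f ` P1)"
      unfolding linkage_def
    proof (intro conjI)
      show "finite (f ` P1)" using P1(1) by (simp add: linkage_def)
      show "card (f ` P1) = k" using P1(1) finj by (simp add: linkage_def card_image)
      show "\<forall>p\<in>f ` P1. walk ?E p \<and> hd p \<in> A \<and> last p \<in> B" using fw by blast
      show "\<forall>p\<in>f ` P1. \<forall>q\<in>f ` P1. p \<noteq> q \<longrightarrow> set p \<inter> set q = {}" using fd by blast
    qed
    then show ?thesis by blast
  qed
qed



lemma indeg_le:
  assumes "digraph V E"
  shows "in_degree E w \<le> max_in_degree V E"
proof (cases "w \<in> V")
  case True
  have "finite V" using assms by (simp add: digraph_def)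
  then show ?thesis using True by (auto simp: max_in_degree_def)
next
  case False
  then have "{u. (u, w) \<in> E} = {}" using assms by (auto simp: digraph_def)
  then show ?thesis by (simp add: in_degree_def)
qed

lemma delta_pos:
  assumes "digraph V E" "E \<noteq> {}"
  shows "0 < max_in_degree V E"
proof -
  obtain u v where uv: "(u, v) \<in> E" using assms(2) by auto
  have fV: "finite V" and EV: "E \<subseteq> V \<times> V" using assms(1) by (auto simp: digraph_def)
  have "v \<in> V" using uv EV by auto
  have "{u. (u, v) \<in> E} \<subseteq> V" using EV by auto
  then have "finite {u. (u, v) \<in> E}" using fV finite_subset by blast
  moreover have "u \<in> {u. (u, v) \<in> E}" using uv by simp
  ultimately have "0 < in_degree E v" unfolding in_degree_def by (metis card_gt_0_iff empty_iff)
  then show ?thesis using indeg_le[OF assms(1)] by (meson order_less_le_trans)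
qed

lemma no_sep:
  fixes V :: "'a set" and E :: "('a \<times> 'a) set" and S T :: "'a set"
  assumes dg: "digraph V E"
    and "E \<noteq> {}"
    and SV: "S \<subseteq> V" and S0: "\<forall>s\<in>S. in_degree E s = 0"
    and "T \<subseteq> V"
    and deg: "\<forall>v\<in>V - T. out_degree E v \<ge> max_in_degree V E"
    and X: "finite X" "sep E S T X"
  shows "card S \<le> card X"
proof (rule ccontr)
  assume "\<not> card S \<le> card X"
  then have lt: "card X < card S" by simp
  have fV: "finite V" and EV: "E \<subseteq> V \<times> V" using dg by (auto simp: digraph_def)
  have fS: "finite S" using SV fV finite_subset by blast
  define D where "D = max_in_degree V E"
  have Dpos: "0 < D" using delta_pos[OF dg assms(2)] by (simp add: D_def)
  define R where "R = {v. \<exists>p. walk E p \<and> hd p \<in> S - X \<and> last p = v \<and> set p \<inter> X = {}}"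
  have SXR: "S - X \<subseteq> R"
  proof
    fix s assume "s \<in> S - X"
    then show "s \<in> R" unfolding R_def by (intro CollectI exI[of _ "[s]"]) auto
  qed
  have RV: "R \<subseteq> V"
  proof
    fix v assume "v \<in> R"
    then obtain p where p: "walk E p" "hd p \<in> S - X" "last p = v" by (auto simp: R_def)
    then have "set p \<subseteq> V" using walk_in_V[OF p(1) EV] SV by auto
    moreover have "p \<noteq> []" using p by (simp add: walk_def)
    ultimately show "v \<in> V" using p(3) last_in_set by blast
  qed
  have fR: "finite R" using RV fV finite_subset by blast
  have RT: "R \<inter> T = {}"
  proof (rule ccontr)
    assume "R \<inter> T \<noteq> {}"
    then obtain v p where p: "walk E p" "hd p \<in> S - X" "last p = v" "set p \<inter> X = {}" "v \<in> T"
      by (auto simp: R_def)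
    then show False using X(2) unfolding sep_def by auto
  qed
  have RX: "R \<inter> X = {}"
  proof (rule ccontr)
    assume "R \<inter> X \<noteq> {}"
    then obtain v p where p: "walk E p" "last p = v" "set p \<inter> X = {}" "v \<in> X"
      by (auto simp: R_def)
    moreover have "p \<noteq> []" using p by (simp add: walk_def)
    ultimately show False using last_in_set by blast
  qed
  have closed: "w \<in> R \<union> X" if vw: "v \<in> R" "(v, w) \<in> E" for v w
  proof (cases "w \<in> X")
    case False
    obtain p where p: "walk E p" "hd p \<in> S - X" "last p = v" "set p \<inter> X = {}"
      using vw(1) by (auto simp: R_def)
    have "p \<noteq> []" using p by (simp add: walk_def)
    then have "walk E (p @ [w]) \<and> hd (p @ [w]) \<in> S - X \<and> last (p @ [w]) = w \<and> set (p @ [w]) \<inter> X = {}"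
      using walk_snoc[of E p w] p vw False by auto
    then show ?thesis unfolding R_def by blast
  qed simp
  have noS: "w \<notin> S" if "(u, w) \<in> E" for u w
  proof
    assume "w \<in> S"
    then have "card {u. (u, w) \<in> E} = 0" using S0 by (simp add: in_degree_def)
    moreover have "finite {u. (u, w) \<in> E}"
      using EV fV by (metis (no_types, lifting) finite_subset mem_Collect_eq mem_Sigma_iff subsetD subsetI)
    ultimately show False using that by auto
  qed
  define W where "W = (R \<union> X) - S"
  have fW: "finite W" using fR X(1) by (simp add: W_def)
  have fout: "finite {w. (v, w) \<in> E}" for v
    using EV fV by (metis (no_types, lifting) finite_subset mem_Collect_eq mem_Sigma_iff subsetD subsetI)
  have fin: "finite {u. (u, w) \<in> E}" for w
    using EV fV by (metis (no_types, lifting) finite_subset mem_Collect_eq mem_Sigma_iff subsetD subsetI)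
  define Ou where "Ou = Sigma R (\<lambda>v. {w. (v, w) \<in> E})"
  have "card Ou = (\<Sum>v\<in>R. out_degree E v)"
    unfolding Ou_def out_degree_def using fR fout by simp
  moreover have "of_nat (card R) * D \<le> (\<Sum>v\<in>R. out_degree E v)"
    by (rule sum_bounded_below) (use RV RT deg D_def in auto)
  ultimately have c1: "card R * D \<le> card Ou" by simp
  define I where "I = Sigma W (\<lambda>w. {u. (u, w) \<in> E})"
  have "Ou \<subseteq> (\<lambda>(w, u). (u, w)) ` I"
  proof
    fix z assume "z \<in> Ou"
    then obtain v w where z: "z = (v, w)" "v \<in> R" "(v, w) \<in> E" by (auto simp: Ou_def)
    then have "w \<in> W" using closed noS by (auto simp: W_def)
    then show "z \<in> (\<lambda>(w, u). (u, w)) ` I" using z by (auto simp: I_def image_iff)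
  qed
  moreover have "finite I" using fW fin by (simp add: I_def)
  ultimately have "card Ou \<le> card I" by (meson card_image_le card_mono finite_imageI le_trans)
  moreover have "card I = (\<Sum>w\<in>W. in_degree E w)"
    unfolding I_def in_degree_def using fW fin by simp
  moreover have "(\<Sum>w\<in>W. in_degree E w) \<le> of_nat (card W) * D"
    by (rule sum_bounded_above) (use indeg_le[OF dg] D_def in auto)
  ultimately have "card R * D \<le> card W * D" using c1 unfolding of_nat_id by linarith
  then have c2: "card R \<le> card W" using Dpos by simp
  have "W = (R - S) \<union> (X - S)" by (auto simp: W_def)
  moreover have "(R - S) \<inter> (X - S) = {}" using RX by auto
  ultimately have cW: "card W = card (R - S) + card (X - S)"
    using fR X(1) by (simp add: card_Un_disjoint)
  have "R - S = R - (S - X)" using RX by auto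
  then have "card (R - S) = card R - card (S - X)"
    using card_Diff_subset[OF _ SXR] fS by simp
  moreover have "card (S - X) \<le> card R" using card_mono[OF fR SXR] .
  moreover have "card X = card (S \<inter> X) + card (X - S)" using card_Int_Diff[OF X(1), of S] by (simp add: Int_commute)
  moreover have "card S = card (S \<inter> X) + card (S - X)" using card_Int_Diff[OF fS] .
  ultimately have "card W < card R" using cW lt by linarith
  then show False using c2 by simp
qed



theorem lemma22:
  fixes V :: "'a set" and E :: "('a \<times> 'a) set" and S T :: "'a set"
  assumes "digraph V E"
    and "E \<noteq> {}"
    and "S \<subseteq> V" and "S \<noteq> {}" and "\<forall>s\<in>S. in_degree E s = 0"
    and "T \<subseteq> V" and "T \<inter> S = {}"
    and "\<forall>v\<in>V - T. out_degree E v \<ge> max_in_degree V E"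
  shows "\<exists>P :: 'a \<Rightarrow> 'a list.
           (\<forall>s\<in>S. dpath V E (P s) \<and> hd (P s) = s \<and> last (P s) \<in> T) \<and>
           (\<forall>s\<in>S. \<forall>s'\<in>S. s \<noteq> s' \<longrightarrow> set (P s) \<inter> set (P s') = {})"
proof -
  have fV: "finite V" and EV: "E \<subseteq> V \<times> V" using assms(1) by (auto simp: digraph_def)
  have fE: "finite E" using fV EV finite_subset by blast
  have fS: "finite S" using fV assms(3) finite_subset by blast
  have fT: "finite T" using fV assms(6) finite_subset by blast
  have "\<And>X. finite X \<Longrightarrow> sep E S T X \<Longrightarrow> card S \<le> card X"
    using no_sep[OF assms(1,2,3,5,6,8)] by blast
  then obtain P0 where "linkage E S T (card S) P0" using menger[OF fE fS fT] by blast
  then obtain P1 where P1: "linkage E S T (card S) P1" "\<forall>p\<in>P1. clean S T p"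
    using refine by blast
  have P1w: "\<And>p. p \<in> P1 \<Longrightarrow> walk E p \<and> hd p \<in> S \<and> last p \<in> T \<and> p \<noteq> []"
    using P1 by (auto simp: linkage_def walk_def)
  have disjP: "\<And>p p'. p \<in> P1 \<Longrightarrow> p' \<in> P1 \<Longrightarrow> p \<noteq> p' \<Longrightarrow> set p \<inter> set p' = {}"
    using P1(1) unfolding linkage_def by blast
  have hdinj: "inj_on hd P1"
  proof (rule inj_onI)
    fix p p' assume a: "p \<in> P1" "p' \<in> P1" "hd p = hd p'"
    show "p = p'"
    proof (rule ccontr)
      assume "p \<noteq> p'"
      then have "set p \<inter> set p' = {}" using disjP a by blast
      moreover have "hd p \<in> set p" "hd p' \<in> set p'" using P1w[OF a(1)] P1w[OF a(2)] by auto
      ultimately show False using a(3) by auto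
    qed
  qed
  have "hd ` P1 = S"
  proof (rule card_subset_eq[OF fS])
    show "hd ` P1 \<subseteq> S" using P1w by auto
    show "card (hd ` P1) = card S" using card_image[OF hdinj] P1(1) by (simp add: linkage_def)
  qed
  then have "\<forall>s\<in>S. \<exists>p\<in>P1. hd p = s" by auto
  then obtain f where f: "\<And>s. s \<in> S \<Longrightarrow> f s \<in> P1 \<and> hd (f s) = s" by metis
  show ?thesis
  proof (intro exI[of _ f] conjI ballI impI)
    fix s assume s: "s \<in> S"
    have p: "walk E (f s)" "f s \<noteq> []" "last (f s) \<in> T" "hd (f s) \<in> S" using P1w f s by blast+
    have "distinct (f s)" using P1(2) f s by (simp add: clean_def)
    moreover have "set (f s) \<subseteq> V" using walk_in_V[OF p(1) EV] p(4) assms(3) by blast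
    moreover have "\<forall>i. Suc i < length (f s) \<longrightarrow> (f s ! i, f s ! Suc i) \<in> E"
      using p(1) unfolding walk_def successively_conv_nth by blast
    ultimately show "dpath V E (f s)" using p(2) by (simp add: dpath_def)
    show "hd (f s) = s" using f s by blast
    show "last (f s) \<in> T" using p by blast
  next
    fix s s' assume a: "s \<in> S" "s' \<in> S" "s \<noteq> s'"
    then have "f s \<noteq> f s'" using f by metis
    then show "set (f s) \<inter> set (f s') = {}" using disjP f a by blast
  qed
qed


end
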